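(* Let $B = M \cup \{\omega_1,\ldots,\omega_p\}$ with $p\ge1$ and $\omega_i\in P_2\setminus M$, and let $r(B)=\max\{d(\omega_1),\ldots,d(\omega_p)\}$. Then for every finite system $F$ of Boolean functions of variables $x_1,\ldots,x_n$, $$d(F)\le (2r(B)+1)\left(2^{I_B(F)}-1\right).$$
   Context: $P_2$ denotes the set of all Boolean functions and $M\subset P_2$ the set of all monotone Boolean functions (including the constants). Tuples in $\{0,1\}^n$ are compared componentwise. An increasing chain is a sequence of pairwise distinct tuples $\tilde\alpha_1,\ldots,\tilde\alpha_r\in\{0,1\}^n$ with $\tilde\alpha_i\le\tilde\alpha_{i+1}$ for all $i$. For a Boolean function $f$, a pair $(\tilde\alpha,\tilde\beta)$ with $\tilde\alpha\le\tilde\beta$ and $f(\tilde\alpha)>f(\tilde\beta)$ is a jump of $f$; a pair is a jump of a system $F$ if it is a jump of some $f\in F$. For a chain $C=(\tilde\alpha_1,\ldots,\tilde\alpha_r)$, $d_C(F)$ is the number of $i$ with $(\tilde\alpha_i,\tilde\alpha_{i+1})$ a jump of $F$, and $d(F)=\max_C d_C(F)$ over all chains; $d(f)=d(\{f\})$. A circuit over $B$ is a Boolean circuit with inputs $x_1,\ldots,x_n$ whose gates compute functions of $B$; gates computing functions in $M$ have weight $0$ and gates computing some $\omega_i$ have weight $1$. $I_B(F)$ is the minimum total weight of a circuit over $B$ realizing all functions of $F$. *)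

theory Defs
  imports Main
begin

text \<open>Boolean tuples in {0,1}^n are bool lists of length n; a Boolean function of
n variables is a map bool list => bool considered on lists of length n.\<close>

definition tle :: "bool list \<Rightarrow> bool list \<Rightarrow> bool" where
  "tle a b \<longleftrightarrow> list_all2 (\<le>) a b"

definition monotone_fn :: "nat \<Rightarrow> (bool list \<Rightarrow> bool) \<Rightarrow> bool" where
  "monotone_fn k f \<longleftrightarrow>
     (\<forall>a b. length a = k \<longrightarrow> length b = k \<longrightarrow> tle a b \<longrightarrow> f a \<le> f b)"

definition is_jump :: "(bool list \<Rightarrow> bool) \<Rightarrow> bool list \<Rightarrow> bool list \<Rightarrow> bool" where
  "is_jump f a b \<longleftrightarrow> tle a b \<and> f a > f b"

definition sys_jump :: "(bool list \<Rightarrow> bool) set \<Rightarrow> bool list \<Rightarrow> bool list \<Rightarrow> bool" where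
  "sys_jump F a b \<longleftrightarrow> (\<exists>f\<in>F. is_jump f a b)"

definition is_chain :: "nat \<Rightarrow> bool list list \<Rightarrow> bool" where
  "is_chain n C \<longleftrightarrow> distinct C \<and> (\<forall>a\<in>set C. length a = n) \<and>
     (\<forall>i. Suc i < length C \<longrightarrow> tle (C ! i) (C ! Suc i))"

definition dC :: "(bool list \<Rightarrow> bool) set \<Rightarrow> bool list list \<Rightarrow> nat" where
  "dC F C = card {i. Suc i < length C \<and> sys_jump F (C ! i) (C ! Suc i)}"

definition dsys :: "nat \<Rightarrow> (bool list \<Rightarrow> bool) set \<Rightarrow> nat" where
  "dsys n F = Max (dC F ` {C. is_chain n C})"

definition dfun :: "nat \<Rightarrow> (bool list \<Rightarrow> bool) \<Rightarrow> nat" where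
  "dfun n f = dsys n {f}"

text \<open>The basis B = M \<union> {omega_1,...,omega_p} is given by the list ws of the
omega_i together with their arities.\<close>

definition in_basis :: "(nat \<times> (bool list \<Rightarrow> bool)) list \<Rightarrow> nat \<Rightarrow> (bool list \<Rightarrow> bool) \<Rightarrow> bool" where
  "in_basis ws k g \<longleftrightarrow> monotone_fn k g \<or>
     (\<exists>(k', w)\<in>set ws. k' = k \<and> (\<forall>xs. length xs = k \<longrightarrow> g xs = w xs))"

definition rB :: "(nat \<times> (bool list \<Rightarrow> bool)) list \<Rightarrow> nat" where
  "rB ws = Max ((\<lambda>(k, w). dfun k w) ` set ws)"

text \<open>A circuit is a list of gates; gate j is a pair (g, args) where g is the
function computed by the gate (of arity length args) and args are the node
indices of its inputs.  Nodes 0..n-1 are the inputs x_1..x_n, node n+j is gate j.\<close>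

type_synonym gate = "(bool list \<Rightarrow> bool) \<times> nat list"

definition gate_step :: "bool list \<Rightarrow> gate \<Rightarrow> bool list" where
  "gate_step vs gt = vs @ [fst gt (map (\<lambda>j. vs ! j) (snd gt))]"

definition node_vals :: "gate list \<Rightarrow> bool list \<Rightarrow> bool list" where
  "node_vals C x = foldl gate_step x C"

definition circuit_over :: "nat \<Rightarrow> (nat \<times> (bool list \<Rightarrow> bool)) list \<Rightarrow> gate list \<Rightarrow> bool" where
  "circuit_over n ws C \<longleftrightarrow> (\<forall>j < length C.
     (\<forall>a\<in>set (snd (C ! j)). a < n + j) \<and> in_basis ws (length (snd (C ! j))) (fst (C ! j)))"

definition gate_weight :: "gate \<Rightarrow> nat" where
  "gate_weight gt = (if monotone_fn (length (snd gt)) (fst gt) then 0 else 1)"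

definition circuit_weight :: "gate list \<Rightarrow> nat" where
  "circuit_weight C = sum_list (map gate_weight C)"

definition realizes :: "nat \<Rightarrow> gate list \<Rightarrow> (bool list \<Rightarrow> bool) set \<Rightarrow> bool" where
  "realizes n C F \<longleftrightarrow> (\<forall>f\<in>F. \<exists>v < n + length C.
     \<forall>x. length x = n \<longrightarrow> node_vals C x ! v = f x)"

definition I_B :: "nat \<Rightarrow> (nat \<times> (bool list \<Rightarrow> bool)) list \<Rightarrow> (bool list \<Rightarrow> bool) set \<Rightarrow> nat" where
  "I_B n ws F = (LEAST w. \<exists>C. circuit_over n ws C \<and> realizes n C F \<and> circuit_weight C = w)"

end

theory Submission imports Defs begin

lemma tle_refl: "tle a a" unfolding tle_def by (simp add: list_all2_refl)
lemma tle_trans: "tle a b \<Longrightarrow> tle b c \<Longrightarrow> tle a c"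
  unfolding tle_def by (rule list_all2_trans[of "(\<le>)" "(\<le>)" "(\<le>)"]) auto
lemma tle_antisym: "tle a b \<Longrightarrow> tle b a \<Longrightarrow> a = b"
  unfolding tle_def by (rule list_all2_antisym[of "(\<le>)" "(\<le>)"]) auto
lemma tle_length: "tle a b \<Longrightarrow> length a = length b"
  unfolding tle_def by (rule list_all2_lengthD)

lemma foldl_gs: "\<exists>ys. foldl gate_step vs D = vs @ ys \<and> length ys = length D"
proof (induction D arbitrary: vs)
  case Nil then show ?case by simp
next
  case (Cons g D)
  obtain ys where "foldl gate_step (gate_step vs g) D = gate_step vs g @ ys" "length ys = length D"
    using Cons by blast
  then have "foldl gate_step vs (g#D) = vs @ ([fst g (map (\<lambda>j. vs ! j) (snd g))] @ ys)"
    by (simp add: gate_step_def)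
  then show ?case using \<open>length ys = length D\<close> by (intro exI[of _ "[fst g (map (\<lambda>j. vs ! j) (snd g))] @ ys"]) simp
qed

lemma nv_length: "length (node_vals C x) = length x + length C"
  using foldl_gs[of x C] unfolding node_vals_def by auto

lemma nv_prefix:
  assumes "k \<le> length C" "v < length x + k"
  shows "node_vals C x ! v = node_vals (take k C) x ! v"
proof -
  have "node_vals C x = foldl gate_step (node_vals (take k C) x) (drop k C)"
    unfolding node_vals_def by (metis append_take_drop_id foldl_append)
  then obtain ys where "node_vals C x = node_vals (take k C) x @ ys"
    using foldl_gs by metis
  moreover have "length (node_vals (take k C) x) = length x + k"
    using assms by (simp add: nv_length)
  ultimately show ?thesis using assms by (simp add: nth_append)
qed

lemma nv_input: "v < length x \<Longrightarrow> node_vals C x ! v = x ! v"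
  using nv_prefix[of 0 C v x] by (simp add: node_vals_def)

lemma nv_gate:
  assumes "j < length C" "\<forall>a\<in>set (snd (C!j)). a < length x + j"
  shows "node_vals C x ! (length x + j) = fst (C!j) (map (\<lambda>a. node_vals C x ! a) (snd (C!j)))"
proof -
  have "node_vals C x ! (length x + j) = node_vals (take (Suc j) C) x ! (length x + j)"
    using assms by (intro nv_prefix) auto
  also have "take (Suc j) C = take j C @ [C!j]" using assms by (simp add: take_Suc_conv_app_nth)
  also have "node_vals (take j C @ [C!j]) x = gate_step (node_vals (take j C) x) (C!j)"
    by (simp add: node_vals_def)
  also have "\<dots> ! (length x + j) = fst (C!j) (map (\<lambda>a. node_vals (take j C) x ! a) (snd (C!j)))"
    using assms by (simp add: gate_step_def nth_append nv_length min_def)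
  also have "map (\<lambda>a. node_vals (take j C) x ! a) (snd (C!j)) = map (\<lambda>a. node_vals C x ! a) (snd (C!j))"
    using assms by (auto intro!: map_cong nv_prefix[symmetric])
  finally show ?thesis .
qed

lemma nv_mono:
  assumes "\<forall>j'<j. monotone_fn (length (snd (C!j'))) (fst (C!j')) \<and> (\<forall>a\<in>set (snd (C!j')). a < n + j')"
    and "j \<le> length C" "length x = n" "length y = n" "tle x y" "v < n + j"
  shows "node_vals C x ! v \<le> node_vals C y ! v"
  using assms(6)
proof (induction v rule: less_induct)
  case (less v)
  show ?case
  proof (cases "v < n")
    case True
    have "x ! v \<le> y ! v" using list_all2_nthD[of "(\<le>)" x y v] assms True unfolding tle_def by simp
    then show ?thesis using assms nv_input[of v x C] nv_input[of v y C] True by simp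
  next
    case False
    then obtain j' where v: "v = n + j'" and j': "j' < j" using less by (metis add_less_imp_less_left le_Suc_ex not_less)
    have g: "monotone_fn (length (snd (C!j'))) (fst (C!j'))" "\<forall>a\<in>set (snd (C!j')). a < n + j'"
      using assms(1) j' by auto
    have jl: "j' < length C" using j' assms by simp
    have "tle (map (\<lambda>a. node_vals C x ! a) (snd (C!j'))) (map (\<lambda>a. node_vals C y ! a) (snd (C!j')))"
      unfolding tle_def list_all2_map1 list_all2_map2
      using g(2) less.IH v j' by (auto intro!: list_all2_all_nthI)
    then show ?thesis using nv_gate[of j' C x] nv_gate[of j' C y] g jl v assms(3,4)
      unfolding monotone_fn_def by (simp; metis length_map)
  qed
qed


lemma nv_replace:
  assumes "j < length C" "node_vals C x ! (length x + j) = c"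
  shows "node_vals (C[j := (\<lambda>_. c, [])]) x = node_vals C x"
proof -
  have val: "fst (C!j) (map (\<lambda>a. node_vals (take j C) x ! a) (snd (C!j))) = c"
  proof -
    have "node_vals C x ! (length x + j) = node_vals (take (Suc j) C) x ! (length x + j)"
      using assms by (intro nv_prefix) auto
    also have "take (Suc j) C = take j C @ [C!j]" using assms by (simp add: take_Suc_conv_app_nth)
    also have "node_vals (take j C @ [C!j]) x = gate_step (node_vals (take j C) x) (C!j)"
      by (simp add: node_vals_def)
    finally show ?thesis using assms by (simp add: gate_step_def nth_append nv_length min_def)
  qed
  have "\<forall>k\<le>length C. node_vals (take k (C[j := (\<lambda>_. c, [])])) x = node_vals (take k C) x"
  proof (intro allI impI)
    fix k assume "k \<le> length C"
    then show "node_vals (take k (C[j := (\<lambda>_. c, [])])) x = node_vals (take k C) x"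
    proof (induction k)
      case 0 then show ?case by simp
    next
      case (Suc k)
      have e1: "take (Suc k) C = take k C @ [C!k]" using Suc by (simp add: take_Suc_conv_app_nth)
      have e2: "take (Suc k) (C[j := (\<lambda>_. c, [])]) = take k (C[j := (\<lambda>_. c, [])]) @ [C[j := (\<lambda>_. c, [])]!k]"
        using Suc by (simp add: take_Suc_conv_app_nth)
      have ih: "node_vals (take k (C[j := (\<lambda>_. c, [])])) x = node_vals (take k C) x" using Suc by simp
      show ?case
      proof (cases "k = j")
        case True
        then show ?thesis unfolding e1 e2 using ih val Suc
          by (simp add: node_vals_def gate_step_def)
      next
        case False
        then show ?thesis unfolding e1 e2 using ih
          by (simp add: node_vals_def)
      qed
    qed
  qed
  then show ?thesis using assms by (metis order_refl length_list_update take_all)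
qed

lemma card_lessSuc: "card {i. i < Suc m \<and> P i} = card {i. i < m \<and> P i} + (if P m then 1 else 0)"
proof -
  have "{i. i < Suc m \<and> P i} = {i. i < m \<and> P i} \<union> (if P m then {m} else {})" using less_Suc_eq by auto
  then show ?thesis by auto
qed

lemma rise_fall:
  "card {i. i<m \<and> \<not> g i \<and> g (Suc i)} + (if g 0 then 1 else 0)
   = card {i. i<m \<and> g i \<and> \<not> g (Suc i)} + (if g m then 1 else 0)"
  by (induction m) (auto simp: card_lessSuc)

lemma finite_chains: "finite {C. is_chain k C}"
proof -
  let ?A = "{a::bool list. length a = k}"
  have fA: "finite ?A" using finite_lists_length_eq[of "UNIV::bool set" k] by simp
  have "{C. is_chain k C} \<subseteq> {xs. set xs \<subseteq> ?A \<and> length xs \<le> card ?A}"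
  proof
    fix C assume "C \<in> {C. is_chain k C}"
    then have d: "distinct C" and s: "set C \<subseteq> ?A" unfolding is_chain_def by auto
    have "length C = card (set C)" using d by (simp add: distinct_card)
    also have "\<dots> \<le> card ?A" using s fA by (rule card_mono[rotated])
    finally show "C \<in> {xs. set xs \<subseteq> ?A \<and> length xs \<le> card ?A}" using s by simp
  qed
  then show ?thesis using finite_lists_length_le[OF fA] by (rule finite_subset)
qed

lemma dC_le_dsys: "is_chain k C \<Longrightarrow> dC F C \<le> dsys k F"
  unfolding dsys_def using finite_chains by (intro Max_ge) auto

lemma dC_fin: "finite {i. Suc i < length C \<and> P i}" by (rule finite_subset[of _ "{..<length C}"]) auto


lemma card_shift: "card {i. Suc i < Suc (Suc m) \<and> P i} = card {i. i < Suc m \<and> P i}"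
  by simp

lemma chain_build:
  assumes "\<forall>i. Suc i < R \<longrightarrow> tle (h i) (h (Suc i))" "\<forall>i<R. length (h i) = k"
  shows "\<exists>C. is_chain k C \<and> (0<R \<longrightarrow> C \<noteq> [] \<and> last C = h (R-1) \<and> (\<forall>x\<in>set C. tle x (last C)))
         \<and> card {i. Suc i < R \<and> w (h i) \<and> \<not> w (h (Suc i))} \<le> dC {w} C"
  using assms
proof (induction R)
  case 0
  show ?case by (intro exI[of _ "[]"]) (simp add: is_chain_def)
next
  case (Suc R)
  from Suc.prems have p1: "\<forall>i. Suc i < R \<longrightarrow> tle (h i) (h (Suc i))" "\<forall>i<R. length (h i) = k" by auto
  obtain C where C: "is_chain k C" "0<R \<longrightarrow> C \<noteq> [] \<and> last C = h (R-1) \<and> (\<forall>x\<in>set C. tle x (last C))"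
      "card {i. Suc i < R \<and> w (h i) \<and> \<not> w (h (Suc i))} \<le> dC {w} C"
    using Suc.IH[OF p1] by blast
  show ?case
  proof (cases R)
    case 0
    then show ?thesis using Suc.prems
      by (intro exI[of _ "[h 0]"]) (simp add: is_chain_def tle_refl dC_def)
  next
    case (Suc m)
    have Cne: "C \<noteq> []" and lastC: "last C = h m" and allC: "\<forall>x\<in>set C. tle x (last C)"
      using C(2) Suc by auto
    have tab: "tle (h m) (h R)" using Suc.prems Suc by auto
    have lenR: "length (h R) = k" using Suc.prems by auto
    have cardeq: "card {i. Suc i < Suc R \<and> w (h i) \<and> \<not> w (h (Suc i))}
        = card {i. Suc i < R \<and> w (h i) \<and> \<not> w (h (Suc i))} + (if w (h m) \<and> \<not> w (h R) then 1 else 0)"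
      using Suc card_lessSuc[of m "\<lambda>i. w (h i) \<and> \<not> w (h (Suc i))"] by simp
    show ?thesis
    proof (cases "h R = h m")
      case True
      then show ?thesis using C cardeq Suc Cne lastC allC by auto
    next
      case False
      define C' where "C' = C @ [h R]"
      obtain L where L: "length C = Suc L" using Cne by (cases C) auto
      have lastnth: "C ! L = h m" using lastC L Cne by (simp add: last_conv_nth)
      have notin: "h R \<notin> set C"
      proof
        assume "h R \<in> set C"
        then have "tle (h R) (h m)" using allC lastC by auto
        then show False using tab False tle_antisym by blast
      qed
      have ch: "is_chain k C'"
        unfolding is_chain_def C'_def
      proof (intro conjI allI impI)
        show "distinct (C @ [h R])" using C(1) notin by (simp add: is_chain_def)
        show "\<forall>a\<in>set (C @ [h R]). length a = k" using C(1) lenR by (simp add: is_chain_def)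
        fix i assume i: "Suc i < length (C @ [h R])"
        show "tle ((C @ [h R]) ! i) ((C @ [h R]) ! Suc i)"
        proof (cases "Suc i < length C")
          case True then show ?thesis using C(1) by (simp add: is_chain_def nth_append)
        next
          case False
          then have "i = L" using i L by simp
          then show ?thesis using lastnth tab L by (simp add: nth_append)
        qed
      qed
      have lastC': "last C' = h R" by (simp add: C'_def)
      have allC': "\<forall>x\<in>set C'. tle x (last C')"
        using allC lastC tab tle_trans tle_refl by (auto simp: C'_def)
      have dCeq: "dC {w} C' = dC {w} C + (if sys_jump {w} (h m) (h R) then 1 else 0)"
      proof -
        have "dC {w} C' = card {i. i < Suc L \<and> sys_jump {w} (C' ! i) (C' ! Suc i)}"
          unfolding dC_def C'_def using L by simp
        also have "\<dots> = card {i. i < L \<and> sys_jump {w} (C' ! i) (C' ! Suc i)} + (if sys_jump {w} (C'!L) (C'!Suc L) then 1 else 0)"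
          by (rule card_lessSuc)
        also have "{i. i < L \<and> sys_jump {w} (C' ! i) (C' ! Suc i)} = {i. Suc i < length C \<and> sys_jump {w} (C ! i) (C ! Suc i)}"
          using L by (auto simp: C'_def nth_append)
        also have "C'!L = h m" using L lastnth by (simp add: C'_def nth_append)
        also have "C'!Suc L = h R" using L by (simp add: C'_def nth_append)
        finally show ?thesis unfolding dC_def .
      qed
      have "sys_jump {w} (h m) (h R) = (w (h m) \<and> \<not> w (h R))"
        using tab by (auto simp: sys_jump_def is_jump_def)
      then show ?thesis using ch lastC' allC' dCeq cardeq C(3) Suc
        by (intro exI[of _ C']) (auto simp: C'_def)
    qed
  qed
qed


lemma weight_update:
  assumes "j < length C"
  shows "circuit_weight (C[j := g]) + gate_weight (C!j) = circuit_weight C + gate_weight g"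
proof -
  have "C = take j C @ C!j # drop (Suc j) C" using assms by (rule id_take_nth_drop)
  then have a: "circuit_weight C = circuit_weight (take j C) + gate_weight (C!j) + circuit_weight (drop (Suc j) C)"
    unfolding circuit_weight_def by (metis add.assoc list.simps(9) map_append sum_list.Cons sum_list.append)
  have b: "circuit_weight (C[j:=g]) = circuit_weight (take j C) + gate_weight g + circuit_weight (drop (Suc j) C)"
    using assms unfolding circuit_weight_def upd_conv_take_nth_drop[OF assms] by simp
  show ?thesis using a b by simp
qed

lemma rB_ge: "(k, w) \<in> set ws \<Longrightarrow> dfun k w \<le> rB ws"
  unfolding rB_def by (rule Max_ge) force+

context
  fixes n :: nat and ws :: "(nat \<times> (bool list \<Rightarrow> bool)) list" and Ch :: "bool list list"
  assumes chl: "\<forall>a\<in>set Ch. length a = n"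
    and cht: "\<forall>i. Suc i < length Ch \<longrightarrow> tle (Ch!i) (Ch!Suc i)"
begin

definition jset :: "gate list \<Rightarrow> nat set" where
  "jset C = {i. Suc i < length Ch \<and> (\<exists>v < n + length C. node_vals C (Ch!i) ! v \<and> \<not> node_vals C (Ch!Suc i) ! v)}"

lemma jset_fin: "finite (jset C)"
  unfolding jset_def by (rule finite_subset[of _ "{..<length Ch}"]) auto

lemma omega_bound:
  assumes co: "circuit_over n ws C" and j: "j < length C"
    and pre: "\<forall>j'<j. monotone_fn (length (snd (C!j'))) (fst (C!j'))"
    and nm: "\<not> monotone_fn (length (snd (C!j))) (fst (C!j))"
  shows "card {i. Suc i < length Ch \<and> node_vals C (Ch!i) ! (n+j) \<noteq> node_vals C (Ch!Suc i) ! (n+j)} \<le> 2 * rB ws + 1"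
proof -
  define g where "g i = node_vals C (Ch!i) ! (n+j)" for i
  define args where "args = snd (C!j)"
  define h where "h i = map (\<lambda>a. node_vals C (Ch!i) ! a) args" for i
  obtain k w where kw: "(k, w) \<in> set ws" "k = length args" "\<forall>xs. length xs = k \<longrightarrow> fst (C!j) xs = w xs"
    using co j nm unfolding circuit_over_def in_basis_def args_def by fastforce
  have argsv: "\<forall>a\<in>set args. a < n + j" using co j unfolding circuit_over_def args_def by auto
  have pre2: "\<forall>j'<j. monotone_fn (length (snd (C!j'))) (fst (C!j')) \<and> (\<forall>a\<in>set (snd (C!j')). a < n + j')"
    using pre co j unfolding circuit_over_def by auto
  have gh: "g i = w (h i)" if "i < length Ch" for i
  proof -
    have ln: "length (Ch!i) = n" using chl that by auto
    have "g i = fst (C!j) (h i)" unfolding g_def h_def args_def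
      using nv_gate[of j C "Ch!i"] j argsv ln unfolding args_def by simp
    then show ?thesis using kw by (simp add: h_def)
  qed
  have hmono: "\<forall>i. Suc i < length Ch \<longrightarrow> tle (h i) (h (Suc i))"
  proof (intro allI impI)
    fix i assume i: "Suc i < length Ch"
    have "node_vals C (Ch!i) ! a \<le> node_vals C (Ch!Suc i) ! a" if "a \<in> set args" for a
      using nv_mono[OF pre2, of "Ch!i" "Ch!Suc i" a] j chl cht i argsv that by auto
    then show "tle (h i) (h (Suc i))" unfolding h_def tle_def list_all2_map1 list_all2_map2
      by (auto intro!: list_all2_all_nthI)
  qed
  have hlen: "\<forall>i<length Ch. length (h i) = k" using kw by (simp add: h_def)
  obtain D where D: "is_chain k D" "card {i. Suc i < length Ch \<and> w (h i) \<and> \<not> w (h (Suc i))} \<le> dC {w} D"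
    using chain_build[OF hmono hlen, of w] by blast
  have drops: "card {i. Suc i < length Ch \<and> g i \<and> \<not> g (Suc i)} \<le> rB ws"
  proof -
    have "{i. Suc i < length Ch \<and> g i \<and> \<not> g (Suc i)} = {i. Suc i < length Ch \<and> w (h i) \<and> \<not> w (h (Suc i))}"
      using gh by auto
    also have "card \<dots> \<le> dC {w} D" by (rule D(2))
    also have "\<dots> \<le> dfun k w" unfolding dfun_def by (rule dC_le_dsys[OF D(1)])
    also have "\<dots> \<le> rB ws" using kw(1) by (rule rB_ge)
    finally show ?thesis .
  qed
  show ?thesis
  proof (cases "length Ch")
    case 0 then show ?thesis by simp
  next
    case (Suc m)
    have e1: "{i. Suc i < length Ch \<and> g i \<and> \<not> g (Suc i)} = {i. i < m \<and> g i \<and> \<not> g (Suc i)}" using Suc by auto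
    have "{i. Suc i < length Ch \<and> g i \<noteq> g (Suc i)} = {i. i < m \<and> g i \<and> \<not> g (Suc i)} \<union> {i. i < m \<and> \<not> g i \<and> g (Suc i)}"
      using Suc by auto
    then have "card {i. Suc i < length Ch \<and> g i \<noteq> g (Suc i)} \<le> card {i. i < m \<and> g i \<and> \<not> g (Suc i)} + card {i. i < m \<and> \<not> g i \<and> g (Suc i)}"
      by (simp add: card_Un_le)
    moreover have "card {i. i < m \<and> \<not> g i \<and> g (Suc i)} \<le> card {i. i < m \<and> g i \<and> \<not> g (Suc i)} + 1"
      using rise_fall[of m g] by (auto split: if_splits)
    ultimately show ?thesis using drops e1 unfolding g_def by simp
  qed
qed

lemma no_jumps:
  assumes co: "circuit_over n ws C" and allm: "\<forall>j<length C. monotone_fn (length (snd (C!j))) (fst (C!j))"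
  shows "jset C = {}"
proof -
  have pre2: "\<forall>j'<length C. monotone_fn (length (snd (C!j'))) (fst (C!j')) \<and> (\<forall>a\<in>set (snd (C!j')). a < n + j')"
    using allm co unfolding circuit_over_def by auto
  have "False" if i: "Suc i < length Ch" and v: "v < n + length C"
     and a: "node_vals C (Ch!i) ! v" and b: "\<not> node_vals C (Ch!Suc i) ! v" for i v
  proof -
    have "node_vals C (Ch!i) ! v \<le> node_vals C (Ch!Suc i) ! v"
      using nv_mono[OF pre2, of "Ch!i" "Ch!Suc i" v] chl cht i v by simp
    then show False using a b by simp
  qed
  then show ?thesis unfolding jset_def by blast
qed

lemma core:
  "circuit_over n ws C \<Longrightarrow> circuit_weight C = w \<Longrightarrow> card (jset C) \<le> (2 * rB ws + 1) * (2 ^ w - 1)"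
proof (induction w arbitrary: C)
  case 0
  have "\<forall>j<length C. monotone_fn (length (snd (C!j))) (fst (C!j))"
  proof (intro allI impI)
    fix j assume "j < length C"
    then have "gate_weight (C!j) \<le> circuit_weight C" unfolding circuit_weight_def
      by (metis elem_le_sum_list length_map nth_map)
    then show "monotone_fn (length (snd (C!j))) (fst (C!j))" using 0 by (auto simp: gate_weight_def split: if_splits)
  qed
  then show ?case using no_jumps[OF 0(1)] by simp
next
  case (Suc w)
  show ?case
  proof (cases "\<forall>j<length C. monotone_fn (length (snd (C!j))) (fst (C!j))")
    case True then show ?thesis using no_jumps[OF Suc(2)] by simp
  next
    case False
    define j where "j = (LEAST j. j < length C \<and> \<not> monotone_fn (length (snd (C!j))) (fst (C!j)))"
    have jP: "j < length C \<and> \<not> monotone_fn (length (snd (C!j))) (fst (C!j))"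
      using False unfolding j_def by (metis (mono_tags, lifting) LeastI)
    have pre: "\<forall>j'<j. monotone_fn (length (snd (C!j'))) (fst (C!j'))"
      using jP unfolding j_def by (metis (mono_tags, lifting) not_less_Least order.strict_trans)
    define Cc where "Cc c = C[j := (\<lambda>_. c, [])]" for c :: bool
    have gw1: "gate_weight (C!j) = 1" using jP by (simp add: gate_weight_def)
    have gw0: "gate_weight ((\<lambda>_. c, []) :: gate) = 0" for c
      by (simp add: gate_weight_def monotone_fn_def)
    have wc: "circuit_weight (Cc c) = w" for c
      using weight_update[of j C "(\<lambda>_. c, [])"] jP gw1 gw0 Suc(3) by (simp add: Cc_def)
    have coc: "circuit_over n ws (Cc c)" for c
      using Suc(2) jP unfolding circuit_over_def Cc_def
      by (auto simp: nth_list_update in_basis_def monotone_fn_def)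
    have IH: "card (jset (Cc c)) \<le> (2 * rB ws + 1) * (2 ^ w - 1)" for c
      using Suc.IH[OF coc wc] .
    define G where "G = {i. Suc i < length Ch \<and> node_vals C (Ch!i) ! (n+j) \<noteq> node_vals C (Ch!Suc i) ! (n+j)}"
    have Gb: "card G \<le> 2 * rB ws + 1" unfolding G_def using omega_bound[OF Suc(2)] jP pre by blast
    have sub: "jset C \<subseteq> G \<union> jset (Cc False) \<union> jset (Cc True)"
    proof
      fix i assume i: "i \<in> jset C"
      show "i \<in> G \<union> jset (Cc False) \<union> jset (Cc True)"
      proof (cases "i \<in> G")
        case True then show ?thesis by simp
      next
        case False
        define c where "c = node_vals C (Ch!i) ! (n+j)"
        have il: "i < length Ch" "Suc i < length Ch" using i unfolding jset_def by auto
        have ln: "length (Ch!i) = n" "length (Ch!Suc i) = n" using il chl by auto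
        have c2: "node_vals C (Ch!Suc i) ! (n+j) = c" using False i unfolding G_def jset_def c_def by auto
        have r1: "node_vals (Cc c) (Ch!i) = node_vals C (Ch!i)"
          unfolding Cc_def using nv_replace[of j C "Ch!i" c] jP ln c_def by simp
        have r2: "node_vals (Cc c) (Ch!Suc i) = node_vals C (Ch!Suc i)"
          unfolding Cc_def using nv_replace[of j C "Ch!Suc i" c] jP ln c2 by simp
        have "i \<in> jset (Cc c)" using i r1 r2 unfolding jset_def by (simp add: Cc_def)
        then show ?thesis by (cases c) auto
      qed
    qed
    have fG: "finite G" unfolding G_def by (rule finite_subset[of _ "{..<length Ch}"]) auto
    have "card (jset C) \<le> card (G \<union> jset (Cc False) \<union> jset (Cc True))"
      using sub fG jset_fin by (intro card_mono) auto
    also have "\<dots> \<le> card G + card (jset (Cc False)) + card (jset (Cc True))"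
      by (meson add_mono card_Un_le le_trans order_refl)
    also have "\<dots> \<le> (2 * rB ws + 1) + (2 * rB ws + 1) * (2 ^ w - 1) + (2 * rB ws + 1) * (2 ^ w - 1)"
      using Gb IH by (intro add_mono) auto
    also have "\<dots> = (2 * rB ws + 1) * (2 ^ Suc w - 1)"
    proof -
      obtain t where t: "(2::nat) ^ w = Suc t" using not0_implies_Suc[of "(2::nat)^w"] by auto
      have "(2::nat) ^ Suc w - 1 = Suc (2 * t)" using t by simp
      then show ?thesis using t by (simp add: algebra_simps)
    qed
    finally show ?thesis .
  qed
qed

end


definition Gf :: "nat \<Rightarrow> (bool list \<Rightarrow> bool) \<Rightarrow> bool list \<Rightarrow> bool" where
  "Gf n f z = (\<exists>y. length y = n \<and> f y \<and> tle y (take n z) \<and> tle (map Not y) (drop n z))"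

lemma Gf_mono: "monotone_fn m (Gf n f)"
  unfolding monotone_fn_def Gf_def le_bool_def
proof (intro allI impI, elim exE conjE)
  fix z z' y assume t: "tle z z'" and y: "length y = n" "f y" "tle y (take n z)" "tle (map Not y) (drop n z)"
  have "tle (take n z) (take n z')" "tle (drop n z) (drop n z')" using t unfolding tle_def by auto
  then show "\<exists>y. length y = n \<and> f y \<and> tle y (take n z') \<and> tle (map Not y) (drop n z')"
    using y tle_trans by blast
qed

lemma Gf_val: "length x = n \<Longrightarrow> Gf n f (x @ map Not x) = f x"
  unfolding Gf_def
proof
  assume "\<exists>y. length y = n \<and> f y \<and> tle y (take n (x @ map Not x)) \<and> tle (map Not y) (drop n (x @ map Not x))"
    and lx: "length x = n"
  then obtain y where y: "length y = n" "f y" "tle y x" "tle (map Not y) (map Not x)" by auto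
  have "tle x y" using y(4) y(1) lx unfolding tle_def list_all2_conv_all_nth by auto
  then have "y = x" using y(3) tle_antisym by blast
  then show "f x" using y by simp
next
  assume "f x" "length x = n"
  then show "\<exists>y. length y = n \<and> f y \<and> tle y (take n (x @ map Not x)) \<and> tle (map Not y) (drop n (x @ map Not x))"
    by (intro exI[of _ x]) (simp add: tle_refl)
qed

lemma complete:
  assumes kw: "(k, w) \<in> set ws" and nm: "\<not> monotone_fn k w" and fin: "finite F"
  shows "\<exists>C. circuit_over n ws C \<and> realizes n C F"
proof -
  obtain a b where ab: "length a = k" "length b = k" "tle a b" "w a" "\<not> w b"
    using nm unfolding monotone_fn_def le_bool_def by blast
  obtain fs where fs: "set fs = F" using finite_list[OF fin] by blast
  define cF :: gate where "cF = ((\<lambda>_. False), [])"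
  define cT :: gate where "cT = ((\<lambda>_. True), [])"
  define nargs where "nargs i = map (\<lambda>l. if a!l = b!l then (if a!l then n+1 else n) else i) [0..<k]" for i
  define negg :: "nat \<Rightarrow> gate" where "negg i = (w, nargs i)" for i
  define fargs where "fargs = [0..<n] @ map (\<lambda>i. n+2+i) [0..<n]"
  define fg :: "(bool list \<Rightarrow> bool) \<Rightarrow> gate" where "fg f = (Gf n f, fargs)" for f
  define C where "C = [cF, cT] @ map negg [0..<n] @ map fg fs"
  have lenC: "length C = 2 + n + length fs" by (simp add: C_def)
  have C0: "C!0 = cF" and C1: "C!1 = cT" by (simp_all add: C_def)
  have C2: "C!(2+i) = negg i" if "i < n" for i using that by (simp add: C_def nth_append)
  have C3: "C!(2+n+t) = fg (fs!t)" if "t < length fs" for t using that by (simp add: C_def nth_append)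
  have nargs_ok: "\<forall>a\<in>set (nargs i). a < n + (2 + i)" for i by (auto simp: nargs_def)
  have fargs_ok: "\<forall>a\<in>set fargs. a < n + (2 + n + t)" for t by (auto simp: fargs_def)
  have co: "circuit_over n ws C"
    unfolding circuit_over_def
  proof (intro allI impI)
    fix j assume j: "j < length C"
    show "(\<forall>a\<in>set (snd (C ! j)). a < n + j) \<and> in_basis ws (length (snd (C ! j))) (fst (C ! j))"
    proof (cases "j < 2")
      case True
      then have "j = 0 \<or> j = 1" by auto
      then show ?thesis using C0 C1 by (auto simp: cF_def cT_def in_basis_def monotone_fn_def)
    next
      case False
      show ?thesis
      proof (cases "j < 2 + n")
        case True
        define i where "i = j - 2"
        have i: "j = 2 + i" "i < n" using False True by (auto simp: i_def)
        have "length (nargs i) = k" by (simp add: nargs_def)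
        then show ?thesis using C2[OF i(2)] i nargs_ok[of i] kw
          by (auto simp: negg_def in_basis_def)
      next
        case False2: False
        define t where "t = j - (2 + n)"
        have t: "j = 2 + n + t" "t < length fs" using j lenC False2 by (auto simp: t_def)
        show ?thesis using C3[OF t(2)] t fargs_ok[of t] Gf_mono
          by (auto simp: fg_def in_basis_def)
      qed
    qed
  qed
  have vals: "node_vals C x ! (n + (2 + n + t)) = (fs!t) x" if x: "length x = n" and t: "t < length fs" for x t
  proof -
    let ?V = "node_vals C x"
    have Vin: "?V ! i = x ! i" if "i < n" for i using nv_input[of i x C] that x by simp
    have VF: "?V ! n = False" using nv_gate[of 0 C x] lenC C0 x by (simp add: cF_def)
    have VT: "?V ! (n+1) = True" using nv_gate[of 1 C x] lenC C1 x by (simp add: cT_def)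
    have Vneg: "?V ! (n + (2 + i)) = (\<not> x ! i)" if i: "i < n" for i
    proof -
      have "?V ! (n + (2 + i)) = w (map (\<lambda>a. ?V ! a) (nargs i))"
        using nv_gate[of "2+i" C x] lenC C2[OF i] x nargs_ok[of i] i by (simp add: negg_def)
      also have "map (\<lambda>a. ?V ! a) (nargs i) = (if x!i then b else a)"
      proof (rule nth_equalityI)
        show "length (map (\<lambda>a. ?V ! a) (nargs i)) = length (if x!i then b else a)"
          using ab by (simp add: nargs_def)
        fix l assume "l < length (map (\<lambda>a. ?V ! a) (nargs i))"
        then have l: "l < k" by (simp add: nargs_def)
        have le: "a!l \<le> b!l" using list_all2_nthD[of "(\<le>)" a b l] ab(3) l ab(1) unfolding tle_def by simp
        show "map (\<lambda>a. ?V ! a) (nargs i) ! l = (if x!i then b else a) ! l"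
          using l le VF VT Vin[OF i] by (auto simp: nargs_def le_bool_def)
      qed
      finally show ?thesis using ab by auto
    qed
    have "?V ! (n + (2 + n + t)) = Gf n (fs!t) (map (\<lambda>a. ?V ! a) fargs)"
      using nv_gate[of "2+n+t" C x] lenC C3[OF t] x fargs_ok[of t] t by (simp add: fg_def)
    also have "map (\<lambda>a. ?V ! a) fargs = x @ map Not x"
    proof -
      have "map (\<lambda>a. ?V ! a) [0..<n] = x" using Vin x by (simp add: list_eq_iff_nth_eq)
      moreover have "map (\<lambda>a. ?V ! a) (map (\<lambda>i. n+2+i) [0..<n]) = map Not x"
        using Vneg x by (simp add: list_eq_iff_nth_eq add.assoc)
      ultimately show ?thesis by (simp add: fargs_def)
    qed
    also have "Gf n (fs!t) (x @ map Not x) = (fs!t) x" using Gf_val x by simp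
    finally show ?thesis .
  qed
  have "realizes n C F"
    unfolding realizes_def
  proof
    fix f assume "f \<in> F"
    then obtain t where t: "t < length fs" "f = fs!t" using fs by (metis in_set_conv_nth)
    show "\<exists>v<n + length C. \<forall>x. length x = n \<longrightarrow> node_vals C x ! v = f x"
      using vals t lenC by (intro exI[of _ "n + (2 + n + t)"]) auto
  qed
  then show ?thesis using co by blast
qed


theorem lemma1:
  fixes ws :: "(nat \<times> (bool list \<Rightarrow> bool)) list"
    and n :: nat
    and F :: "(bool list \<Rightarrow> bool) set"
  assumes "length ws \<ge> 1"
    and "\<forall>(k, w)\<in>set ws. \<not> monotone_fn k w"
    and "finite F"
  shows "dsys n F \<le> (2 * rB ws + 1) * (2 ^ I_B n ws F - 1)"
proof -
  obtain k w where kw: "(k, w) \<in> set ws" using assms(1) by (cases ws) auto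
  have nm: "\<not> monotone_fn k w" using kw assms(2) by auto
  obtain C0 where "circuit_over n ws C0 \<and> realizes n C0 F" using complete[OF kw nm assms(3)] by blast
  then have ex: "\<exists>w C. circuit_over n ws C \<and> realizes n C F \<and> circuit_weight C = w" by blast
  obtain C where C: "circuit_over n ws C" "realizes n C F" "circuit_weight C = I_B n ws F"
    using LeastI_ex[OF ex] unfolding I_B_def by blast
  show ?thesis unfolding dsys_def
  proof (rule Max.boundedI)
    show "finite (dC F ` {C. is_chain n C})" using finite_chains by simp
    have "is_chain n []" by (simp add: is_chain_def)
    then show "dC F ` {C. is_chain n C} \<noteq> {}" by blast
    fix d assume "d \<in> dC F ` {C. is_chain n C}"
    then obtain Ch where Ch: "is_chain n Ch" "d = dC F Ch" by auto
    have chl: "\<forall>a\<in>set Ch. length a = n" and cht: "\<forall>i. Suc i < length Ch \<longrightarrow> tle (Ch!i) (Ch!Suc i)"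
      using Ch(1) unfolding is_chain_def by auto
    have sub: "{i. Suc i < length Ch \<and> sys_jump F (Ch!i) (Ch!Suc i)} \<subseteq> jset n Ch C"
    proof
      fix i assume i: "i \<in> {i. Suc i < length Ch \<and> sys_jump F (Ch!i) (Ch!Suc i)}"
      then obtain f where f: "f \<in> F" "f (Ch!i)" "\<not> f (Ch!Suc i)" "Suc i < length Ch"
        unfolding sys_jump_def is_jump_def by auto
      obtain v where v: "v < n + length C" "\<forall>x. length x = n \<longrightarrow> node_vals C x ! v = f x"
        using C(2) f(1) unfolding realizes_def by blast
      have "length (Ch!i) = n" "length (Ch!Suc i) = n" using chl f(4) by auto
      then show "i \<in> jset n Ch C" unfolding jset_def[OF chl cht] using f v by auto
    qed
    have "d \<le> card (jset n Ch C)" unfolding Ch(2) dC_def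
      by (rule card_mono[OF jset_fin[OF chl cht] sub])
    also have "\<dots> \<le> (2 * rB ws + 1) * (2 ^ I_B n ws F - 1)"
      using core[OF chl cht C(1) C(3)] .
    finally show "d \<le> (2 * rB ws + 1) * (2 ^ I_B n ws F - 1)" .
  qed
qed

end
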